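(* Consider the nonparametric change point model in the context, with minimal spacing $\delta$. For $1\le s<b<e\le T$ and $z\in\mathbb{R}$, let $\Lambda^b_{s,e}(z)=D^b_{s,e}(z)-\Delta^b_{s,e}(z)$. Then \[ \mathbb{P}\Big\{\max_{1\le s<b<e\le T}\sup_{z\in\mathbb{R}}|\Lambda^b_{s,e}(z)|>\sqrt{\log\Big(\frac{T^4}{12\delta}\Big)+\log(n_{1:T})}+6\sqrt{\log(n_{1:T})}+\frac{48\log(n_{1:T})}{\sqrt{n_{1:T}}}\Big\} \] is at most \[ \frac{12\log(n_{1:T})}{T^3n_{1:T}}+\frac{24\,T}{n_{1:T}\log(n_{1:T})\,\delta}. \] Moreover, \[ \mathbb{P}\Big\{\max_{1\le s<e\le T}\sup_{z\in\mathbb{R}}\Big|\frac{1}{\sqrt{n_{s:e}}}\sum_{t=s}^e\sum_{i=1}^{n_t}\big(\mathbb{1}\{Y_{t,i}\le z\}-\mathbb{E}\,\mathbb{1}\{Y_{t,i}\le z\}\big)\Big|>\sqrt{\log\Big(\frac{T^4}{12\delta}\Big)+\log(n_{1:T})}+6\sqrt{\log(n_{1:T})}+\frac{48\log(n_{1:T})}{\sqrt{n_{1:T}}}\Big\} \] is at most \[ \frac{12\log(n_{1:T})}{T^3n_{1:T}}+\frac{24\,T}{n_{1:T}\log(n_{1:T})\,\delta}. \]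
   Context: Model: $\{Y_{t,i}: t=1,\dots,T,\ i=1,\dots,n_t\}$ are independent with $Y_{t,i}\sim F_t$, where the $F_t$ are CDFs. Change points: there are integers $0=\eta_0<\eta_1<\dots<\eta_K<\eta_{K+1}=T$ with $F_{\eta_k+1}=\dots=F_{\eta_{k+1}}$ for $k=0,\dots,K$, $F_{\eta_k}\ne F_{\eta_k+1}$ for $k=1,\dots,K$, and $\min_k(\eta_k-\eta_{k-1})\ge\delta>0$. Notation: $n_{s:e}=\sum_{t=s}^e n_t$. Sample and population cumulative distributions: $\widehat F_{s:e}(z)=n_{s:e}^{-1}\sum_{t=s}^e\sum_{i=1}^{n_t}\mathbb{1}\{Y_{t,i}\le z\}$ and $F_{s:e}(z)=n_{s:e}^{-1}\sum_{t=s}^e n_tF_t(z)$. CUSUM statistics: \[ D^b_{s,e}(z)=\sqrt{\frac{n_{s:b}n_{(b+1):e}}{n_{s:e}}}\{\widehat F_{s:b}(z)-\widehat F_{(b+1):e}(z)\},\qquad \Delta^b_{s,e}(z)=\sqrt{\frac{n_{s:b}n_{(b+1):e}}{n_{s:e}}}\{F_{s:b}(z)-F_{(b+1):e}(z)\}. \] *)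

theory Defs
  imports "HOL-Probability.Probability"
begin

definition nsum :: "(nat \<Rightarrow> nat) \<Rightarrow> nat \<Rightarrow> nat \<Rightarrow> nat" where
  "nsum n s e = (\<Sum>t = s..e. n t)"

definition Fhat :: "(nat \<Rightarrow> nat \<Rightarrow> 'a \<Rightarrow> real) \<Rightarrow> (nat \<Rightarrow> nat) \<Rightarrow> nat \<Rightarrow> nat \<Rightarrow> real \<Rightarrow> 'a \<Rightarrow> real" where
  "Fhat Y n s e z w =
     (1 / real (nsum n s e)) * (\<Sum>t = s..e. \<Sum>i = 1..n t. (if Y t i w \<le> z then 1 else 0))"

definition Fpop :: "(nat \<Rightarrow> real \<Rightarrow> real) \<Rightarrow> (nat \<Rightarrow> nat) \<Rightarrow> nat \<Rightarrow> nat \<Rightarrow> real \<Rightarrow> real" where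
  "Fpop F n s e z = (1 / real (nsum n s e)) * (\<Sum>t = s..e. real (n t) * F t z)"

definition Dcusum :: "(nat \<Rightarrow> nat \<Rightarrow> 'a \<Rightarrow> real) \<Rightarrow> (nat \<Rightarrow> nat) \<Rightarrow> nat \<Rightarrow> nat \<Rightarrow> nat \<Rightarrow> real \<Rightarrow> 'a \<Rightarrow> real" where
  "Dcusum Y n s b e z w =
     sqrt (real (nsum n s b) * real (nsum n (b + 1) e) / real (nsum n s e)) *
     (Fhat Y n s b z w - Fhat Y n (b + 1) e z w)"

definition Deltacusum :: "(nat \<Rightarrow> real \<Rightarrow> real) \<Rightarrow> (nat \<Rightarrow> nat) \<Rightarrow> nat \<Rightarrow> nat \<Rightarrow> nat \<Rightarrow> real \<Rightarrow> real" where
  "Deltacusum F n s b e z =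
     sqrt (real (nsum n s b) * real (nsum n (b + 1) e) / real (nsum n s e)) *
     (Fpop F n s b z - Fpop F n (b + 1) e z)"

end

theory Submission
  imports Defs
begin

locale cpm = prob_space M for M :: "'a measure" +
  fixes Y :: "nat \<Rightarrow> nat \<Rightarrow> 'a \<Rightarrow> real" and n :: "nat \<Rightarrow> nat" and T :: nat
  assumes n_pos: "\<And>t. t \<in> {1..T} \<Longrightarrow> n t \<ge> 1"
    and meas: "\<And>t i. t \<in> {1..T} \<Longrightarrow> i \<in> {1..n t} \<Longrightarrow> Y t i \<in> borel_measurable M"
    and indep: "indep_vars (\<lambda>_. borel) (\<lambda>(t, i). Y t i) {(t, i). t \<in> {1..T} \<and> i \<in> {1..n t}}"
begin

definition II :: "nat \<Rightarrow> nat \<Rightarrow> (nat \<times> nat) set" where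
  "II s e = Sigma {s..e} (\<lambda>t. {1..n t})"

definition pr :: "nat \<times> nat \<Rightarrow> real set \<Rightarrow> real" where
  "pr p A = prob {w \<in> space M. Y (fst p) (snd p) w \<in> A}"

definition SS :: "nat \<Rightarrow> nat \<Rightarrow> real set \<Rightarrow> 'a \<Rightarrow> real" where
  "SS s e A w = (\<Sum>p\<in>II s e. indicator A (Y (fst p) (snd p) w) - pr p A)"

lemma finite_II[simp]: "finite (II s e)"
  unfolding II_def by auto

lemma II_sub: "1 \<le> s \<Longrightarrow> e \<le> T \<Longrightarrow> II s e \<subseteq> II 1 T"
  unfolding II_def by auto

lemma card_II: "card (II s e) = nsum n s e"
  unfolding II_def nsum_def by (subst card_SigmaI) auto

lemma measY: "p \<in> II 1 T \<Longrightarrow> Y (fst p) (snd p) \<in> borel_measurable M"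
  unfolding II_def by (cases p) (auto intro: meas)

lemma sets_pre: "p \<in> II 1 T \<Longrightarrow> A \<in> sets borel \<Longrightarrow> {w \<in> space M. Y (fst p) (snd p) w \<in> A} \<in> sets M"
  using measurable_sets[OF measY] by (auto simp: vimage_def Int_def conj_commute)

lemma pr_mono: "p \<in> II 1 T \<Longrightarrow> A \<subseteq> B \<Longrightarrow> B \<in> sets borel \<Longrightarrow> pr p A \<le> pr p B"
  unfolding pr_def by (rule finite_measure_mono) (auto intro: sets_pre)

lemma pr_le1: "pr p A \<le> 1"
  unfolding pr_def by simp

lemma pr_ge0: "pr p A \<ge> 0"
  unfolding pr_def by simp

lemma hoeff:
  assumes "1 \<le> s" "s \<le> e" "e \<le> T" "A \<in> sets borel" "\<epsilon> \<ge> 0"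
  shows "prob {w \<in> space M. \<bar>SS s e A w\<bar> \<ge> \<epsilon>} \<le> 2 * exp (-2 * \<epsilon>\<^sup>2 / real (nsum n s e))"
proof -
  let ?I = "II s e"
  let ?X = "\<lambda>p w. indicator A (Y (fst p) (snd p) w) :: real"
  have sub: "?I \<subseteq> II 1 T" using II_sub assms by auto
  have Ieq: "{(t, i). t \<in> {1..T} \<and> i \<in> {1..n t}} = II 1 T" unfolding II_def by auto
  have ind0: "indep_vars (\<lambda>_. borel) (\<lambda>p. Y (fst p) (snd p)) (II 1 T)"
  proof -
    have "(\<lambda>(t, i). Y t i) = (\<lambda>p. Y (fst p) (snd p))" by (auto simp: fun_eq_iff split: prod.splits)
    then show ?thesis using indep Ieq by simp
  qed
  have ind1: "indep_vars (\<lambda>_. borel) (\<lambda>p. Y (fst p) (snd p)) ?I"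
    using indep_vars_subset[OF ind0 sub] .
  have ind: "indep_vars (\<lambda>_. borel) ?X ?I"
    using indep_vars_compose2[OF ind1, of "\<lambda>p x. indicator A x" "\<lambda>_. borel"] assms(4) by auto
  interpret H: Hoeffding_ineq M ?I ?X "\<lambda>_. 0" "\<lambda>_. 1" "\<Sum>p\<in>?I. expectation (?X p)"
  proof unfold_locales
    show "finite ?I" by simp
    show "indep_vars (\<lambda>_. borel) ?X ?I" by (rule ind)
    fix i assume "i \<in> ?I"
    show "AE x in M. ?X i x \<in> {0..1}" by (auto simp: indicator_def)
  qed simp
  have exp_eq: "expectation (?X p) = pr p A" if "p \<in> ?I" for p
  proof -
    have "expectation (?X p) = expectation (indicator {w \<in> space M. Y (fst p) (snd p) w \<in> A})"
      by (rule Bochner_Integration.integral_cong) (simp_all add: indicator_def)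
    also have "\<dots> = pr p A" unfolding pr_def
      by (subst Bochner_Integration.integral_indicator) (rule arg_cong[where f="measure M"], auto)
    finally show ?thesis .
  qed
  have pos: "(\<Sum>i\<in>?I. (1 - 0)\<^sup>2) > (0::real)"
  proof -
    have "s \<in> {1..T}" using assms by auto
    then have "(s, 1) \<in> ?I" using n_pos unfolding II_def using assms by auto
    then show ?thesis by (simp add: card_gt_0_iff) blast
  qed
  have "prob {w \<in> space M. \<bar>(\<Sum>p\<in>?I. ?X p w) - (\<Sum>p\<in>?I. expectation (?X p))\<bar> \<ge> \<epsilon>}
        \<le> 2 * exp (-2 * \<epsilon>\<^sup>2 / (\<Sum>i\<in>?I. (1 - 0)\<^sup>2))"
    by (rule H.Hoeffding_ineq_abs_ge[OF assms(5) pos])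
  moreover have "(\<Sum>p\<in>?I. ?X p w) - (\<Sum>p\<in>?I. expectation (?X p)) = SS s e A w" for w
    unfolding SS_def by (simp add: sum_subtractf exp_eq)
  moreover have "(\<Sum>i\<in>?I. (1 - 0)\<^sup>2) = real (nsum n s e)"
    by (simp add: card_II)
  ultimately show ?thesis by simp
qed

end

context cpm
begin

definition Htot :: "real \<Rightarrow> real" where
  "Htot z = (\<Sum>p\<in>II 1 T. pr p {..z})"

definition Ltot :: "real \<Rightarrow> real" where
  "Ltot z = (\<Sum>p\<in>II 1 T. pr p {..<z})"

definition qq :: "nat \<Rightarrow> real" where
  "qq k = Inf {z. Htot z \<ge> real k}"

abbreviation "NN \<equiv> card (II 1 T)"

lemma Htot_mono: "x \<le> y \<Longrightarrow> Htot x \<le> Htot y"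
  unfolding Htot_def by (intro sum_mono pr_mono) auto

lemma Htot_le: "Htot z \<le> NN"
proof -
  have "Htot z \<le> (\<Sum>p\<in>II 1 T. 1)" unfolding Htot_def by (intro sum_mono pr_le1)
  then show ?thesis by simp
qed

lemma Htot_ge0: "Htot z \<ge> 0"
  unfolding Htot_def by (intro sum_nonneg pr_ge0)

lemma pr_right: "p \<in> II 1 T \<Longrightarrow> (\<lambda>m. pr p {..x + 1 / Suc m}) \<longlonglongrightarrow> pr p {..x}"
proof -
  assume p: "p \<in> II 1 T"
  let ?A = "\<lambda>m. {w \<in> space M. Y (fst p) (snd p) w \<in> {..x + 1 / Suc m}}"
  have "(\<lambda>m. measure M (?A m)) \<longlonglongrightarrow> measure M (\<Inter>m. ?A m)"
  proof (rule finite_Lim_measure_decseq)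
    show "range ?A \<subseteq> sets M" by (intro image_subsetI sets_pre[OF p]) auto
    show "decseq ?A"
    proof (rule decseq_SucI)
      fix m
      have "1 / real (Suc (Suc m)) \<le> 1 / real (Suc m)" by (rule divide_left_mono) auto
      then show "?A (Suc m) \<subseteq> ?A m" by auto
    qed
  qed
  moreover have "(\<Inter>m. ?A m) = {w \<in> space M. Y (fst p) (snd p) w \<in> {..x}}"
  proof (intro equalityI subsetI)
    fix w assume w: "w \<in> (\<Inter>m. ?A m)"
    have "Y (fst p) (snd p) w \<le> x"
    proof (rule ccontr)
      assume "\<not> Y (fst p) (snd p) w \<le> x"
      then have d: "Y (fst p) (snd p) w - x > 0" by auto
      then obtain m where m: "1 / real (Suc m) < Y (fst p) (snd p) w - x"
        using nat_approx_posE by blast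
      from w have "Y (fst p) (snd p) w \<le> x + 1 / Suc m" by auto
      with m show False by simp
    qed
    then show "w \<in> {w \<in> space M. Y (fst p) (snd p) w \<in> {..x}}" using w by auto
  next
    fix w assume "w \<in> {w \<in> space M. Y (fst p) (snd p) w \<in> {..x}}"
    then show "w \<in> (\<Inter>m. ?A m)" by (auto intro: add_increasing2)
  qed
  ultimately show ?thesis unfolding pr_def by simp
qed

lemma pr_left: "p \<in> II 1 T \<Longrightarrow> (\<lambda>m. pr p {..x - 1 / Suc m}) \<longlonglongrightarrow> pr p {..<x}"
proof -
  assume p: "p \<in> II 1 T"
  let ?A = "\<lambda>m. {w \<in> space M. Y (fst p) (snd p) w \<in> {..x - 1 / Suc m}}"
  have "(\<lambda>m. measure M (?A m)) \<longlonglongrightarrow> measure M (\<Union>m. ?A m)"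
  proof (rule finite_Lim_measure_incseq)
    show "range ?A \<subseteq> sets M" by (intro image_subsetI sets_pre[OF p]) auto
    show "incseq ?A"
    proof (rule incseq_SucI)
      fix m
      have "1 / real (Suc (Suc m)) \<le> 1 / real (Suc m)" by (rule divide_left_mono) auto
      then show "?A m \<subseteq> ?A (Suc m)" by auto
    qed
  qed
  moreover have "(\<Union>m. ?A m) = {w \<in> space M. Y (fst p) (snd p) w \<in> {..<x}}"
  proof (intro equalityI subsetI)
    fix w assume "w \<in> (\<Union>m. ?A m)"
    then obtain m where "w \<in> space M" "Y (fst p) (snd p) w \<le> x - 1 / Suc m" by auto
    moreover have "1 / real (Suc m) > 0" by simp
    ultimately have "Y (fst p) (snd p) w < x" by linarith
    with \<open>w \<in> space M\<close> show "w \<in> {w \<in> space M. Y (fst p) (snd p) w \<in> {..<x}}" by auto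
  next
    fix w assume w: "w \<in> {w \<in> space M. Y (fst p) (snd p) w \<in> {..<x}}"
    then have d: "x - Y (fst p) (snd p) w > 0" by auto
    then obtain m where m: "1 / real (Suc m) < x - Y (fst p) (snd p) w"
      using nat_approx_posE by blast
    then have "Y (fst p) (snd p) w \<le> x - 1 / Suc m" by linarith
    then show "w \<in> (\<Union>m. ?A m)" using w by blast
  qed
  ultimately show ?thesis unfolding pr_def by simp
qed

lemma pr_top: "p \<in> II 1 T \<Longrightarrow> (\<lambda>m. pr p {..real m}) \<longlonglongrightarrow> 1"
proof -
  assume p: "p \<in> II 1 T"
  let ?A = "\<lambda>m. {w \<in> space M. Y (fst p) (snd p) w \<in> {..real m}}"
  have "(\<lambda>m. measure M (?A m)) \<longlonglongrightarrow> measure M (\<Union>m. ?A m)"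
  proof (rule finite_Lim_measure_incseq)
    show "range ?A \<subseteq> sets M" by (intro image_subsetI sets_pre[OF p]) auto
    show "incseq ?A"
      by (rule incseq_SucI) auto
  qed
  moreover have "(\<Union>m. ?A m) = space M"
  proof (safe)
    fix w assume w: "w \<in> space M"
    obtain m where "Y (fst p) (snd p) w \<le> real m" using real_arch_simple by blast
    then show "w \<in> (\<Union>m. ?A m)" using w by auto
  qed
  ultimately show ?thesis unfolding pr_def by (simp add: prob_space)
qed

lemma pr_bot: "p \<in> II 1 T \<Longrightarrow> (\<lambda>m. pr p {..- real m}) \<longlonglongrightarrow> 0"
proof -
  assume p: "p \<in> II 1 T"
  let ?A = "\<lambda>m. {w \<in> space M. Y (fst p) (snd p) w \<in> {..- real m}}"
  have "(\<lambda>m. measure M (?A m)) \<longlonglongrightarrow> measure M (\<Inter>m. ?A m)"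
  proof (rule finite_Lim_measure_decseq)
    show "range ?A \<subseteq> sets M" by (intro image_subsetI sets_pre[OF p]) auto
    show "decseq ?A"
      by (rule decseq_SucI) auto
  qed
  moreover have "(\<Inter>m. ?A m) = {}"
  proof (safe)
    fix w assume w: "w \<in> (\<Inter>m. ?A m)"
    obtain m where "- Y (fst p) (snd p) w < real m" using reals_Archimedean2 by blast
    moreover have "Y (fst p) (snd p) w \<le> - real m" using w by auto
    ultimately show "w \<in> {}" by simp
  qed
  ultimately show ?thesis unfolding pr_def by simp
qed

lemma Htot_right: "(\<lambda>m. Htot (x + 1 / Suc m)) \<longlonglongrightarrow> Htot x"
  unfolding Htot_def by (intro tendsto_sum pr_right)

lemma Htot_left: "(\<lambda>m. Htot (x - 1 / Suc m)) \<longlonglongrightarrow> Ltot x"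
  unfolding Htot_def Ltot_def by (intro tendsto_sum pr_left)

lemma Htot_top: "\<exists>z. Htot z > real NN - 1"
proof -
  have "(\<lambda>m. Htot (real m)) \<longlonglongrightarrow> (\<Sum>p\<in>II 1 T. 1)"
    unfolding Htot_def by (intro tendsto_sum pr_top)
  then have "(\<lambda>m. Htot (real m)) \<longlonglongrightarrow> real NN" by simp
  then have "eventually (\<lambda>m. Htot (real m) > real NN - 1) sequentially"
    by (rule order_tendstoD) simp
  then show ?thesis by (meson eventually_sequentially order_refl)
qed

lemma Htot_bot: "\<exists>B. \<forall>z\<le>B. Htot z < 1"
proof -
  have "(\<lambda>m. Htot (- real m)) \<longlonglongrightarrow> (\<Sum>p\<in>II 1 T. 0)"
    unfolding Htot_def by (intro tendsto_sum pr_bot)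
  then have "(\<lambda>m. Htot (- real m)) \<longlonglongrightarrow> 0" by simp
  then have "eventually (\<lambda>m. Htot (- real m) < 1) sequentially"
    by (rule order_tendstoD) simp
  then obtain m where "Htot (- real m) < 1" by (meson eventually_sequentially order_refl)
  then show ?thesis by (meson Htot_mono le_less_trans)
qed

lemma bdd_S: "k \<ge> 1 \<Longrightarrow> bdd_below {z. Htot z \<ge> real k}"
proof -
  assume k: "k \<ge> 1"
  obtain B where B: "\<forall>z\<le>B. Htot z < 1" using Htot_bot by blast
  have "B \<le> z" if "Htot z \<ge> real k" for z
  proof (rule ccontr)
    assume "\<not> B \<le> z"
    then have "Htot z < 1" using B by auto
    with that k show False by simp
  qed
  then show ?thesis by (intro bdd_belowI[where m=B]) auto
qed

lemma qq_le: "k \<ge> 1 \<Longrightarrow> Htot z \<ge> real k \<Longrightarrow> qq k \<le> z"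
  unfolding qq_def by (rule cInf_lower) (auto intro: bdd_S)

lemma qq_H: "k \<ge> 1 \<Longrightarrow> Htot z0 \<ge> real k \<Longrightarrow> Htot (qq k) \<ge> real k"
proof -
  assume k: "k \<ge> 1" and z0: "Htot z0 \<ge> real k"
  have ne: "{z. Htot z \<ge> real k} \<noteq> {}" using z0 by auto
  have "Htot (qq k + 1 / Suc m) \<ge> real k" for m
  proof -
    have "Inf {z. Htot z \<ge> real k} < qq k + 1 / Suc m" unfolding qq_def by simp
    then obtain y where y: "Htot y \<ge> real k" "y < qq k + 1 / Suc m"
      using cInf_less_iff[OF ne bdd_S[OF k]] by auto
    then show ?thesis using Htot_mono[of y "qq k + 1 / Suc m"] by linarith
  qed
  then show ?thesis using LIMSEQ_le_const[OF Htot_right] by blast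
qed

lemma qq_L: "k \<ge> 1 \<Longrightarrow> Htot z0 \<ge> real k \<Longrightarrow> Ltot (qq k) \<le> real k"
proof -
  assume k: "k \<ge> 1" and z0: "Htot z0 \<ge> real k"
  have "Htot (qq k - 1 / Suc m) \<le> real k" for m
  proof (rule ccontr)
    assume "\<not> Htot (qq k - 1 / Suc m) \<le> real k"
    then have "qq k \<le> qq k - 1 / Suc m" using qq_le[OF k] by auto
    then show False by simp
  qed
  then show ?thesis using LIMSEQ_le_const2[OF Htot_left] by blast
qed

end

context cpm
begin

lemma SS_diff: "SS s e A w - SS s e B w =
   (\<Sum>p\<in>II s e. indicator A (Y (fst p) (snd p) w) - indicator B (Y (fst p) (snd p) w))
   + (\<Sum>p\<in>II s e. pr p B - pr p A)"
  unfolding SS_def by (simp add: sum_subtractf[symmetric] sum.distrib[symmetric] algebra_simps)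

lemma sum_sub_le: "1 \<le> s \<Longrightarrow> e \<le> T \<Longrightarrow> (\<And>p. p \<in> II 1 T \<Longrightarrow> f p \<ge> (0::real)) \<Longrightarrow>
    (\<Sum>p\<in>II s e. f p) \<le> (\<Sum>p\<in>II 1 T. f p)"
  by (rule sum_mono2) (use II_sub in auto)

lemma key_det:
  assumes s: "1 \<le> s" "e \<le> T" and r: "r \<ge> 0"
    and grid: "\<And>k. k \<in> {1..NN} \<Longrightarrow> \<bar>SS s e {..qq k} w\<bar> \<le> r \<and> \<bar>SS s e {..<qq k} w\<bar> \<le> r"
  shows "\<bar>SS s e {..z} w\<bar> \<le> r + 1"
proof -
  let ?I = "II s e"
  let ?c = "\<lambda>A p. indicator A (Y (fst p) (snd p) w) :: real"
  have sub: "?I \<subseteq> II 1 T" using II_sub s by auto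
  have up: "SS s e {..z} w \<le> r + 1"
  proof (cases "Htot z \<ge> real NN - 1")
    case True
    have "SS s e {..z} w \<le> (\<Sum>p\<in>?I. 1 - pr p {..z})"
      unfolding SS_def by (intro sum_mono) (auto simp: indicator_def)
    also have "\<dots> \<le> (\<Sum>p\<in>II 1 T. 1 - pr p {..z})"
      by (rule sum_sub_le[OF s]) (use pr_le1 in auto)
    also have "\<dots> = real NN - Htot z" unfolding Htot_def by (simp add: sum_subtractf)
    finally show ?thesis using True r by linarith
  next
    case False
    define k where "k = nat \<lfloor>Htot z\<rfloor> + 1"
    have fl: "real k - 1 \<le> Htot z" "Htot z < real k"
      unfolding k_def using Htot_ge0[of z] by (auto simp: of_nat_nat) linarith+
    have k1: "k \<ge> 1" unfolding k_def by simp
    obtain z' where z': "Htot z' > real NN - 1" using Htot_top by blast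
    have kN: "real k \<le> real NN - 1"
    proof -
      have "\<lfloor>Htot z\<rfloor> < int NN - 1" using False by linarith
      then show ?thesis unfolding k_def using Htot_ge0[of z] by (simp add: of_nat_nat)
    qed
    have z'k: "Htot z' \<ge> real k" using z' kN by linarith
    have kin: "k \<in> {1..NN}" using k1 kN by auto
    define v where "v = qq k"
    have Hv: "Htot v \<ge> real k" unfolding v_def by (rule qq_H[OF k1 z'k])
    have Lv: "Ltot v \<le> real k" unfolding v_def by (rule qq_L[OF k1 z'k])
    have zv: "z < v"
    proof (rule ccontr)
      assume "\<not> z < v"
      then have "Htot v \<le> Htot z" by (intro Htot_mono) simp
      with Hv fl show False by linarith
    qed
    have "SS s e {..z} w - SS s e {..<v} w =
       (\<Sum>p\<in>?I. ?c {..z} p - ?c {..<v} p) + (\<Sum>p\<in>?I. pr p {..<v} - pr p {..z})"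
      by (rule SS_diff)
    also have "(\<Sum>p\<in>?I. ?c {..z} p - ?c {..<v} p) \<le> 0"
      by (intro sum_nonpos) (use zv in \<open>auto simp: indicator_def\<close>)
    also have "(\<Sum>p\<in>?I. pr p {..<v} - pr p {..z}) \<le> (\<Sum>p\<in>II 1 T. pr p {..<v} - pr p {..z})"
      by (rule sum_sub_le[OF s]) (use zv in \<open>auto intro!: pr_mono\<close>)
    also have "\<dots> = Ltot v - Htot z" unfolding Ltot_def Htot_def by (simp add: sum_subtractf)
    finally have "SS s e {..z} w - SS s e {..<v} w \<le> Ltot v - Htot z" by simp
    moreover have "SS s e {..<v} w \<le> r" using grid[OF kin] unfolding v_def by auto
    ultimately show ?thesis using Lv fl by linarith
  qed
  have lo: "- SS s e {..z} w \<le> r + 1"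
  proof (cases "Htot z < 1")
    case True
    have "- SS s e {..z} w \<le> (\<Sum>p\<in>?I. pr p {..z})"
      unfolding SS_def by (simp add: sum_negf[symmetric]) (intro sum_mono, auto simp: indicator_def)
    also have "\<dots> \<le> Htot z"
      unfolding Htot_def by (rule sum_sub_le[OF s]) (use pr_ge0 in auto)
    finally show ?thesis using True r by linarith
  next
    case False
    define k where "k = nat \<lfloor>Htot z\<rfloor>"
    have fl: "real k \<le> Htot z" "Htot z < real k + 1"
      unfolding k_def using Htot_ge0[of z] by (auto simp: of_nat_nat)
    have k1: "k \<ge> 1" unfolding k_def using False by linarith
    have kN: "real k \<le> real NN" using fl Htot_le[of z] by linarith
    then have kin: "k \<in> {1..NN}" using k1 by auto
    define u where "u = qq k"
    have Hu: "Htot u \<ge> real k" unfolding u_def by (rule qq_H[OF k1 fl(1)])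
    have uz: "u \<le> z" unfolding u_def by (rule qq_le[OF k1 fl(1)])
    have "SS s e {..u} w - SS s e {..z} w =
       (\<Sum>p\<in>?I. ?c {..u} p - ?c {..z} p) + (\<Sum>p\<in>?I. pr p {..z} - pr p {..u})"
      by (rule SS_diff)
    also have "(\<Sum>p\<in>?I. ?c {..u} p - ?c {..z} p) \<le> 0"
      by (intro sum_nonpos) (use uz in \<open>auto simp: indicator_def\<close>)
    also have "(\<Sum>p\<in>?I. pr p {..z} - pr p {..u}) \<le> (\<Sum>p\<in>II 1 T. pr p {..z} - pr p {..u})"
      by (rule sum_sub_le[OF s]) (use uz in \<open>auto intro!: pr_mono\<close>)
    also have "\<dots> = Htot z - Htot u" unfolding Htot_def by (simp add: sum_subtractf)
    finally have "SS s e {..u} w - SS s e {..z} w \<le> Htot z - Htot u" by simp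
    moreover have "- SS s e {..u} w \<le> r" using grid[OF kin] unfolding u_def by auto
    ultimately show ?thesis using Hu fl by linarith
  qed
  show ?thesis using up lo by linarith
qed

end

lemma aux_ln: fixes x :: real assumes "x \<ge> 2" shows "1 \<le> sqrt (ln x) + 24 * ln x / sqrt x"
proof -
  have l2: "ln 2 \<ge> (1/2::real)"
    using ln_le_minus_one[of "1/2::real"] by (simp add: ln_div)
  show ?thesis
  proof (cases "x \<ge> 4")
    case True
    have "ln (4::real) = 2 * ln 2" using ln_realpow[of 2 2] by simp
    moreover have "ln 4 \<le> ln x" using True by simp
    ultimately have "ln x \<ge> 1" using l2 by linarith
    moreover have "24 * ln x / sqrt x \<ge> 0" using True by simp
    ultimately show ?thesis by (smt (verit) real_sqrt_ge_one)
  next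
    case False
    have "ln 2 \<le> ln x" using assms by simp
    then have lx: "ln x \<ge> 1/2" using l2 by linarith
    have sx: "sqrt x \<le> 2" using False real_sqrt_le_iff[of x 4] by auto
    have sx0: "sqrt x > 0" using assms by simp
    have "24 * ln x / sqrt x \<ge> 24 * (1/2) / 2"
      using lx sx sx0 assms by (intro frac_le) auto
    moreover have "sqrt (ln x) \<ge> 0" using lx by simp
    ultimately show ?thesis by linarith
  qed
qed

context cpm
begin

lemma SS_meas[measurable]: "1 \<le> s \<Longrightarrow> e \<le> T \<Longrightarrow> A \<in> sets borel \<Longrightarrow> SS s e A \<in> borel_measurable M"
proof -
  assume s: "1 \<le> s" "e \<le> T" and A: "A \<in> sets borel"
  have "(\<lambda>w. indicator A (Y (fst p) (snd p) w) :: real) \<in> borel_measurable M" if "p \<in> II s e" for p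
  proof -
    have pI: "p \<in> II 1 T" using that II_sub[OF s] by blast
    show ?thesis using measurable_compose[OF measY[OF pI] borel_measurable_indicator[OF A]]
      by (simp add: o_def)
  qed
  then show ?thesis unfolding SS_def
    by (intro borel_measurable_sum borel_measurable_diff) auto
qed

lemma good_event:
  assumes NN2: "NN \<ge> 2"
  shows "\<exists>G \<in> sets M. prob G \<le> 4 / real NN ^ 5 \<and>
     (\<forall>w \<in> space M - G. \<forall>s e z. 1 \<le> s \<longrightarrow> s \<le> e \<longrightarrow> e \<le> T \<longrightarrow>
        \<bar>SS s e {..z} w\<bar> \<le> (3 * sqrt (ln NN) + 24 * ln NN / sqrt NN) * sqrt (real (nsum n s e)))"
proof -
  define l where "l = ln (real NN)"
  have l0: "l > 0" unfolding l_def using NN2 by simp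
  define r where "r s e = 2 * sqrt l * sqrt (real (nsum n s e))" for s e
  define E where "E j = (case j of (s, e, k, b) \<Rightarrow>
      if 1 \<le> s \<and> s \<le> e \<and> e \<le> T
      then {w \<in> space M. \<bar>SS s e (if b then {..qq k} else {..<qq k}) w\<bar> \<ge> r s e} else {})" for j
  define J where "J = {1..T} \<times> {1..T} \<times> {1..NN} \<times> (UNIV :: bool set)"
  define G where "G = (\<Union>j\<in>J. E j)"
  have finJ: "finite J" unfolding J_def by simp
  have cardJ: "card J = T * T * NN * 2" unfolding J_def by (simp add: card_cartesian_product)
  have TN: "T \<le> NN"
  proof -
    have "T = (\<Sum>t=1..T. 1::nat)" by simp
    also have "\<dots> \<le> nsum n 1 T" unfolding nsum_def by (intro sum_mono) (use n_pos in auto)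
    finally show ?thesis by (simp add: card_II)
  qed
  have Esets: "E j \<in> sets M" for j
  proof -
    obtain s e k b where j: "j = (s, e, k, b)" by (cases j) auto
    show ?thesis
    proof (cases "1 \<le> s \<and> s \<le> e \<and> e \<le> T")
      case True
      then have [measurable]: "SS s e (if b then {..qq k} else {..<qq k}) \<in> borel_measurable M"
        by (intro SS_meas) auto
      show ?thesis unfolding E_def j using True by simp measurable
    qed (simp add: E_def j)
  qed
  have Eprob: "prob (E j) \<le> 2 / real NN ^ 8" for j
  proof -
    obtain s e k b where j: "j = (s, e, k, b)" by (cases j) auto
    show ?thesis
    proof (cases "1 \<le> s \<and> s \<le> e \<and> e \<le> T")
      case True
      have m1: "real (nsum n s e) \<ge> 1"
      proof -
        have "n s \<le> nsum n s e" unfolding nsum_def using True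
          by (intro member_le_sum) auto
        then show ?thesis using n_pos[of s] True by simp
      qed
      have "prob (E j) \<le> 2 * exp (-2 * (r s e)\<^sup>2 / real (nsum n s e))"
        unfolding E_def j using True
        by (simp only: prod.case True simp_thms if_True) (rule hoeff, use True in \<open>auto simp: r_def l0 less_imp_le\<close>)
      also have "-2 * (r s e)\<^sup>2 / real (nsum n s e) = - (real 8 * l)"
        unfolding r_def using m1 l0 by (simp add: power_mult_distrib)
      also have "exp (- (real 8 * l)) = 1 / real NN ^ 8"
      proof -
        have "exp (real 8 * l) = exp l ^ 8" by (rule exp_of_nat_mult)
        also have "exp l = real NN" unfolding l_def using NN2 by simp
        finally have e8: "exp (real 8 * l) = real NN ^ 8" .
        then show ?thesis by (simp only: exp_minus inverse_eq_divide)
      qed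
      finally show ?thesis by simp
    qed (auto simp: E_def j)
  qed
  have "prob G \<le> (\<Sum>j\<in>J. prob (E j))"
    unfolding G_def by (rule measure_UNION_le[OF finJ]) (simp add: Esets)
  also have "\<dots> \<le> (\<Sum>j\<in>J. 2 / real NN ^ 8)" by (intro sum_mono Eprob)
  also have "\<dots> = real (T * T * NN * 2) * 2 / real NN ^ 8" using cardJ by simp
  also have "\<dots> \<le> real (NN * NN * NN * 2) * 2 / real NN ^ 8"
  proof -
    have "T * T * NN * 2 \<le> NN * NN * NN * 2" using TN by (intro mult_le_mono) auto
    then have "real (T * T * NN * 2) \<le> real (NN * NN * NN * 2)" by (simp only: of_nat_le_iff)
    then show ?thesis by (intro divide_right_mono mult_right_mono) auto
  qed
  also have "\<dots> = 4 / real NN ^ 5" using NN2 by (simp add: field_simps power_numeral_reduce)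
  finally have PG: "prob G \<le> 4 / real NN ^ 5" .
  have GS: "G \<in> sets M" unfolding G_def using finJ Esets by auto
  have goodw: "\<bar>SS s e {..z} w\<bar> \<le> (3 * sqrt (ln NN) + 24 * ln NN / sqrt NN) * sqrt (real (nsum n s e))"
    if w: "w \<in> space M - G" and se: "1 \<le> s" "s \<le> e" "e \<le> T" for w s e z
  proof -
    have grid: "\<bar>SS s e {..qq k} w\<bar> \<le> r s e \<and> \<bar>SS s e {..<qq k} w\<bar> \<le> r s e" if k: "k \<in> {1..NN}" for k
    proof -
      have "(s, e, k, True) \<in> J" "(s, e, k, False) \<in> J" unfolding J_def using se k by auto
      then have "w \<notin> E (s, e, k, True)" "w \<notin> E (s, e, k, False)" using w unfolding G_def by auto
      then show ?thesis unfolding E_def using se w by auto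
    qed
    have r0: "r s e \<ge> 0" unfolding r_def using l0 by simp
    have "\<bar>SS s e {..z} w\<bar> \<le> r s e + 1"
      by (rule key_det[OF se(1) se(3) r0 grid])
    also have "\<dots> \<le> (3 * sqrt l + 24 * l / sqrt NN) * sqrt (real (nsum n s e))"
    proof -
      have m1: "sqrt (real (nsum n s e)) \<ge> 1"
      proof -
        have "n s \<le> nsum n s e" unfolding nsum_def using se
          by (intro member_le_sum) auto
        then show ?thesis using n_pos[of s] se by simp
      qed
      have a: "1 \<le> sqrt l + 24 * l / sqrt NN" unfolding l_def using aux_ln[of "real NN"] NN2 by simp
      have "1 \<le> (sqrt l + 24 * l / sqrt NN) * sqrt (real (nsum n s e))"
        using mult_mono[OF a m1] a by simp
      then show ?thesis unfolding r_def by (simp add: algebra_simps)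
    qed
    finally show ?thesis unfolding l_def .
  qed
  show ?thesis using GS PG goodw by blast
qed

end

theorem lemma6:
  fixes M :: "'a measure"
    and Y :: "nat \<Rightarrow> nat \<Rightarrow> 'a \<Rightarrow> real"
    and F :: "nat \<Rightarrow> real \<Rightarrow> real"
    and n :: "nat \<Rightarrow> nat"
    and T K :: nat
    and eta :: "nat \<Rightarrow> nat"
    and \<delta> :: real
  assumes P: "prob_space M"
    and n_pos: "\<And>t. t \<in> {1..T} \<Longrightarrow> n t \<ge> 1"
    and meas: "\<And>t i. t \<in> {1..T} \<Longrightarrow> i \<in> {1..n t} \<Longrightarrow> Y t i \<in> borel_measurable M"
    and indep: "prob_space.indep_vars M (\<lambda>_. borel) (\<lambda>(t, i). Y t i)
                  {(t, i). t \<in> {1..T} \<and> i \<in> {1..n t}}"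
    and distr: "\<And>t i z. t \<in> {1..T} \<Longrightarrow> i \<in> {1..n t} \<Longrightarrow>
                  F t z = measure M {w \<in> space M. Y t i w \<le> z}"
    and eta0: "eta 0 = 0"
    and etaK: "eta (K + 1) = T"
    and eta_mono: "\<And>k. k \<le> K \<Longrightarrow> eta k < eta (k + 1)"
    and const: "\<And>k t. k \<le> K \<Longrightarrow> t \<in> {eta k + 1..eta (k + 1)} \<Longrightarrow> F t = F (eta (k + 1))"
    and change: "\<And>k. k \<in> {1..K} \<Longrightarrow> F (eta k) \<noteq> F (eta k + 1)"
    and spacing: "\<And>k. k \<in> {1..K + 1} \<Longrightarrow> real (eta k - eta (k - 1)) \<ge> \<delta>"
    and delta_pos: "\<delta> > 0"
  shows
    "measure M {w \<in> space M. \<exists>s b e z. 1 \<le> s \<and> s < b \<and> b < e \<and> e \<le> T \<and>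
        \<bar>Dcusum Y n s b e z w - Deltacusum F n s b e z\<bar> >
          sqrt (ln (real T ^ 4 / (12 * \<delta>)) + ln (real (nsum n 1 T)))
          + 6 * sqrt (ln (real (nsum n 1 T)))
          + 48 * ln (real (nsum n 1 T)) / sqrt (real (nsum n 1 T))}
     \<le> 12 * ln (real (nsum n 1 T)) / (real T ^ 3 * real (nsum n 1 T))
       + 24 * real T / (real (nsum n 1 T) * ln (real (nsum n 1 T)) * \<delta>)
   \<and>
    measure M {w \<in> space M. \<exists>s e z. 1 \<le> s \<and> s < e \<and> e \<le> T \<and>
        \<bar>(1 / sqrt (real (nsum n s e))) *
           (\<Sum>t = s..e. \<Sum>i = 1..n t.
              ((if Y t i w \<le> z then 1 else 0)
               - (\<integral>x. (if Y t i x \<le> z then 1 else 0) \<partial>M)))\<bar> >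
          sqrt (ln (real T ^ 4 / (12 * \<delta>)) + ln (real (nsum n 1 T)))
          + 6 * sqrt (ln (real (nsum n 1 T)))
          + 48 * ln (real (nsum n 1 T)) / sqrt (real (nsum n 1 T))}
     \<le> 12 * ln (real (nsum n 1 T)) / (real T ^ 3 * real (nsum n 1 T))
       + 24 * real T / (real (nsum n 1 T) * ln (real (nsum n 1 T)) * \<delta>)"
proof -
  interpret C: cpm M Y n T
    by (rule cpm.intro[OF P], unfold_locales) (use n_pos meas indep in auto)
  define N where "N = nsum n 1 T"
  define l where "l = ln (real N)"
  define R where "R = 12 * ln (real (nsum n 1 T)) / (real T ^ 3 * real (nsum n 1 T))
       + 24 * real T / (real (nsum n 1 T) * ln (real (nsum n 1 T)) * \<delta>)"
  define lam where "lam = sqrt (ln (real T ^ 4 / (12 * \<delta>)) + ln (real (nsum n 1 T)))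
          + 6 * sqrt (ln (real (nsum n 1 T)))
          + 48 * ln (real (nsum n 1 T)) / sqrt (real (nsum n 1 T))"
  define S1 where "S1 = {w \<in> space M. \<exists>s b e z. 1 \<le> s \<and> s < b \<and> b < e \<and> e \<le> T \<and>
        \<bar>Dcusum Y n s b e z w - Deltacusum F n s b e z\<bar> > lam}"
  define S2 where "S2 = {w \<in> space M. \<exists>s e z. 1 \<le> s \<and> s < e \<and> e \<le> T \<and>
        \<bar>(1 / sqrt (real (nsum n s e))) *
           (\<Sum>t = s..e. \<Sum>i = 1..n t.
              ((if Y t i w \<le> z then 1 else 0)
               - (\<integral>x. (if Y t i x \<le> z then 1 else 0) \<partial>M)))\<bar> > lam}"
  have NC: "card (C.II 1 T) = N" unfolding N_def by (rule C.card_II)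
  have TN: "T \<le> N"
  proof -
    have "T = (\<Sum>t=1..T. 1::nat)" by simp
    also have "\<dots> \<le> nsum n 1 T" unfolding nsum_def by (intro sum_mono) (use n_pos in auto)
    finally show ?thesis unfolding N_def .
  qed
  have R0: "R \<ge> 0"
  proof (cases "N = 0")
    case True then show ?thesis unfolding R_def N_def[symmetric] by simp
  next
    case False
    then have "ln (real N) \<ge> 0" by simp
    then show ?thesis unfolding R_def N_def[symmetric] using delta_pos
      by (intro add_nonneg_nonneg divide_nonneg_nonneg mult_nonneg_nonneg) auto
  qed
  have goal: "measure M S1 \<le> R \<and> measure M S2 \<le> R"
  proof (cases "T < 2")
    case True
    then have "S1 = {}" "S2 = {}" unfolding S1_def S2_def by auto
    then show ?thesis using R0 by simp
  next
    case False
    then have N2: "N \<ge> 2" using TN by linarith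
    have l0: "l > 0" unfolding l_def using N2 by simp
    have ex: "\<exists>G\<in>sets M. measure M G \<le> 4 / real N ^ 5 \<and> (\<forall>w\<in>space M - G. \<forall>s e z. 1 \<le> s \<longrightarrow> s \<le> e \<longrightarrow> e \<le> T \<longrightarrow>
        \<bar>C.SS s e {..z} w\<bar> \<le> (3 * sqrt l + 24 * l / sqrt N) * sqrt (real (nsum n s e)))"
      using C.good_event N2 unfolding NC l_def by simp
    obtain G where GS: "G \<in> sets M" and PG: "measure M G \<le> 4 / real N ^ 5"
      and good: "\<And>w s e z. w \<in> space M - G \<Longrightarrow> 1 \<le> s \<Longrightarrow> s \<le> e \<Longrightarrow> e \<le> T \<Longrightarrow>
        \<bar>C.SS s e {..z} w\<bar> \<le> (3 * sqrt l + 24 * l / sqrt N) * sqrt (real (nsum n s e))"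
      using ex by blast
    define c0 where "c0 = 3 * sqrt l + 24 * l / sqrt N"
    have c00: "c0 \<ge> 0" unfolding c0_def using l0 by simp
    have dT: "\<delta> \<le> real T"
    proof -
      have "real (eta (K + 1) - eta (K + 1 - 1)) \<ge> \<delta>" by (rule spacing) auto
      then show ?thesis using etaK by simp
    qed
    have X0: "ln (real T ^ 4 / (12 * \<delta>)) + ln (real N) \<ge> 0"
    proof -
      have T2: "real T \<ge> 2" using False by simp
      have a: "real T ^ 4 / (12 * \<delta>) \<ge> real T ^ 3 / 12"
      proof -
        have "real T ^ 3 / 12 = real T ^ 4 / (12 * real T)" using T2 by (simp add: power_eq_if)
        also have "\<dots> \<le> real T ^ 4 / (12 * \<delta>)" using dT delta_pos
          by (intro divide_left_mono) auto
        finally show ?thesis .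
      qed
      have b: "real T ^ 3 \<ge> 8" using power_mono[OF T2, of 3] by simp
      have "real T ^ 4 / (12 * \<delta>) * real N \<ge> 8 / 12 * 2"
        using a b N2 by (intro mult_mono) auto
      then have "1 \<le> real T ^ 4 / (12 * \<delta>) * real N" by linarith
      moreover have "real T ^ 4 / (12 * \<delta>) > 0" "real N > 0" using delta_pos T2 N2 by auto
      ultimately show ?thesis
      proof -
        assume g1: "1 \<le> real T ^ 4 / (12 * \<delta>) * real N"
          and p1: "real T ^ 4 / (12 * \<delta>) > 0" and p2: "real N > 0"
        define a where "a = real T ^ 4 / (12 * \<delta>)"
        have "ln (a * real N) = ln a + ln (real N)" using p1 p2 unfolding a_def by (rule ln_mult_pos)
        moreover have "0 \<le> ln (a * real N)" using g1 unfolding a_def by (rule ln_ge_zero)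
        ultimately show ?thesis unfolding a_def by linarith
      qed
    qed
    have lam_ge: "lam \<ge> 2 * c0"
      unfolding lam_def c0_def l_def N_def[symmetric] using X0 by simp
    have Fpr: "F t z = C.pr (t, i) {..z}" if "t \<in> {1..T}" "i \<in> {1..n t}" for t i z
      unfolding C.pr_def using distr[OF that] by simp
    have sumSig: "(\<Sum>t=s..e. \<Sum>i=1..n t. g t i) = (\<Sum>p\<in>C.II s e. g (fst p) (snd p))" for s e and g :: "nat \<Rightarrow> nat \<Rightarrow> real"
      unfolding C.II_def by (simp add: sum.Sigma split_def)
    have SSexp: "C.SS s e {..z} w = (\<Sum>t=s..e. \<Sum>i=1..n t. (if Y t i w \<le> z then 1 else 0) - F t z)"
      if se: "1 \<le> s" "e \<le> T" for s e z w
      unfolding sumSig C.SS_def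
    proof (rule sum.cong)
      fix p assume p: "p \<in> C.II s e"
      then have "fst p \<in> {1..T}" "snd p \<in> {1..n (fst p)}" using C.II_sub[OF se] unfolding C.II_def by auto
      then show "indicator {..z} (Y (fst p) (snd p) w) - C.pr p {..z} =
          (if Y (fst p) (snd p) w \<le> z then 1 else 0) - F (fst p) z"
        using Fpr by (simp add: indicator_def)
    qed simp
    have FF: "Fhat Y n s e z w - Fpop F n s e z = C.SS s e {..z} w / real (nsum n s e)"
      if se: "1 \<le> s" "e \<le> T" for s e z w
    proof -
      have "(\<Sum>t = s..e. real (n t) * F t z) = (\<Sum>t=s..e. \<Sum>i=1..n t. F t z)" by simp
      then show ?thesis unfolding Fhat_def Fpop_def SSexp[OF se]
        by (simp add: sum_subtractf right_diff_distrib[symmetric] divide_inverse mult.commute)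
    qed
    have intF: "(\<integral>x. (if Y t i x \<le> z then 1 else 0) \<partial>M) = F t z"
      if "t \<in> {1..T}" "i \<in> {1..n t}" for t i z
    proof -
      have "(\<integral>x. (if Y t i x \<le> z then 1 else 0) \<partial>M) = integral\<^sup>L M (indicator {w \<in> space M. Y t i w \<le> z})"
        by (rule Bochner_Integration.integral_cong) (simp_all add: indicator_def)
      also have "\<dots> = measure M {w \<in> space M. Y t i w \<le> z}"
        by (subst Bochner_Integration.integral_indicator) (rule arg_cong[where f="measure M"], auto)
      finally show ?thesis using distr[OF that] by simp
    qed
    have npos: "real (nsum n s e) \<ge> 1" if "1 \<le> s" "s \<le> e" "e \<le> T" for s e
    proof -
      have "n s \<le> nsum n s e" unfolding nsum_def using that by (intro member_le_sum) auto
      then show ?thesis using n_pos[of s] that by simp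
    qed
    have nsub: "nsum n s' e' \<le> nsum n s e" if "s \<le> s'" "e' \<le> e" for s s' e e'
      unfolding nsum_def by (rule sum_mono2) (use that in auto)
    have S1G: "S1 \<subseteq> G"
    proof
      fix w assume "w \<in> S1"
      then obtain s b e z where w: "w \<in> space M" and sbe: "1 \<le> s" "s < b" "b < e" "e \<le> T"
        and big: "\<bar>Dcusum Y n s b e z w - Deltacusum F n s b e z\<bar> > lam"
        unfolding S1_def by blast
      show "w \<in> G"
      proof (rule ccontr)
        assume "w \<notin> G"
        then have wg: "w \<in> space M - G" using w by auto
        define a where "a = real (nsum n s b)"
        define b' where "b' = real (nsum n (b+1) e)"
        define m where "m = real (nsum n s e)"
        have a1: "a \<ge> 1" unfolding a_def using npos sbe by auto
        have b1: "b' \<ge> 1" unfolding b'_def using npos sbe by auto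
        have am: "a \<le> m" unfolding a_def m_def using nsub[of s s b e] sbe by simp
        have bm: "b' \<le> m" unfolding b'_def m_def using nsub[of s "b+1" e e] sbe by simp
        define g where "g = sqrt (a * b' / m)"
        have gpos: "g \<ge> 0" unfolding g_def using a1 b1 am by simp
        have ga: "g \<le> sqrt a" unfolding g_def using a1 b1 am bm
          by (intro real_sqrt_le_mono) (simp add: divide_le_eq mult_left_mono)
        have gb: "g \<le> sqrt b'" unfolding g_def using a1 b1 am bm
          by (intro real_sqrt_le_mono) (simp add: divide_le_eq mult_right_mono)
        define X1 where "X1 = C.SS s b {..z} w"
        define X2 where "X2 = C.SS (b+1) e {..z} w"
        have X1b: "\<bar>X1\<bar> \<le> c0 * sqrt a" unfolding X1_def a_def c0_def
          by (rule good[OF wg]) (use sbe in auto)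
        have X2b: "\<bar>X2\<bar> \<le> c0 * sqrt b'" unfolding X2_def b'_def c0_def
          by (rule good[OF wg]) (use sbe in auto)
        have eq: "Dcusum Y n s b e z w - Deltacusum F n s b e z = g * (X1 / a - X2 / b')"
          unfolding Dcusum_def Deltacusum_def g_def a_def b'_def m_def X1_def X2_def
          using FF[of s b z w] FF[of "b+1" e z w] sbe
          by (simp add: right_diff_distrib[symmetric] algebra_simps)
        have t1: "g * \<bar>X1\<bar> / a \<le> c0"
        proof -
          have "g * \<bar>X1\<bar> \<le> sqrt a * (c0 * sqrt a)" using ga X1b gpos a1 by (intro mult_mono) auto
          also have "\<dots> = c0 * a" using a1 by simp
          finally show ?thesis using a1 by (simp add: divide_le_eq)
        qed
        have t2: "g * \<bar>X2\<bar> / b' \<le> c0"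
        proof -
          have "g * \<bar>X2\<bar> \<le> sqrt b' * (c0 * sqrt b')" using gb X2b gpos b1 by (intro mult_mono) auto
          also have "\<dots> = c0 * b'" using b1 by simp
          finally show ?thesis using b1 by (simp add: divide_le_eq)
        qed
        have tri: "\<bar>g * (X1 / a - X2 / b')\<bar> \<le> g * \<bar>X1\<bar> / a + g * \<bar>X2\<bar> / b'"
        proof -
          have "\<bar>X1 / a - X2 / b'\<bar> \<le> \<bar>X1 / a\<bar> + \<bar>X2 / b'\<bar>" by (rule abs_triangle_ineq4)
          also have "\<bar>X1 / a\<bar> = \<bar>X1\<bar> / a" using a1 by simp
          also have "\<bar>X2 / b'\<bar> = \<bar>X2\<bar> / b'" using b1 by simp
          finally have "g * \<bar>X1 / a - X2 / b'\<bar> \<le> g * (\<bar>X1\<bar> / a + \<bar>X2\<bar> / b')"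
            using gpos by (rule mult_left_mono)
          then show ?thesis using gpos by (simp add: abs_mult distrib_left)
        qed
        have "\<bar>Dcusum Y n s b e z w - Deltacusum F n s b e z\<bar> \<le> 2 * c0"
          unfolding eq using order_trans[OF tri add_mono[OF t1 t2]] by simp
        then show False using big lam_ge by linarith
      qed
    qed
    have S2G: "S2 \<subseteq> G"
    proof
      fix w assume "w \<in> S2"
      then obtain s e z where w: "w \<in> space M" and se: "1 \<le> s" "s < e" "e \<le> T"
        and big: "\<bar>(1 / sqrt (real (nsum n s e))) *
           (\<Sum>t = s..e. \<Sum>i = 1..n t.
              ((if Y t i w \<le> z then 1 else 0)
               - (\<integral>x. (if Y t i x \<le> z then 1 else 0) \<partial>M)))\<bar> > lam"
        unfolding S2_def by blast
      show "w \<in> G"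
      proof (rule ccontr)
        assume "w \<notin> G"
        then have wg: "w \<in> space M - G" using w by auto
        have m1: "real (nsum n s e) \<ge> 1" using npos se by auto
        have "(\<Sum>t = s..e. \<Sum>i = 1..n t.
              ((if Y t i w \<le> z then 1 else 0)
               - (\<integral>x. (if Y t i x \<le> z then 1 else 0) \<partial>M)))
              = (\<Sum>t = s..e. \<Sum>i = 1..n t. (if Y t i w \<le> z then 1 else 0) - F t z)"
          by (intro sum.cong refl) (use se in \<open>simp add: intF\<close>)
        also have "\<dots> = C.SS s e {..z} w" using SSexp se by simp
        finally have eq: "(\<Sum>t = s..e. \<Sum>i = 1..n t.
              ((if Y t i w \<le> z then 1 else 0)
               - (\<integral>x. (if Y t i x \<le> z then 1 else 0) \<partial>M))) = C.SS s e {..z} w" .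
        have "\<bar>C.SS s e {..z} w\<bar> \<le> c0 * sqrt (real (nsum n s e))"
          unfolding c0_def by (rule good[OF wg]) (use se in auto)
        then have "\<bar>(1 / sqrt (real (nsum n s e))) * C.SS s e {..z} w\<bar> \<le> c0"
          using m1 by (simp add: abs_mult divide_le_eq mult.commute)
        then show False using big eq lam_ge c00 by simp
      qed
    qed
    have PR: "4 / real N ^ 5 \<le> R"
    proof -
      have Npos: "real N \<ge> 2" using N2 by simp
      have lN: "l \<le> real N" unfolding l_def using ln_bound[of "real N"] Npos by simp
      have A0: "12 * l / (real T ^ 3 * real N) \<ge> 0" using l0 by simp
      have "24 / (real N * real N) \<le> 24 / (real N * l)"
        using lN l0 Npos by (intro divide_left_mono mult_left_mono mult_pos_pos) auto
      also have "\<dots> \<le> 24 / (real N * l) * (real T / \<delta>)"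
      proof -
        have "real T / \<delta> \<ge> 1" using dT delta_pos by simp
        moreover have "24 / (real N * l) \<ge> 0" using l0 Npos by simp
        ultimately show ?thesis by (metis mult_left_mono mult.right_neutral)
      qed
      also have "\<dots> = 24 * real T / (real N * l * \<delta>)" by simp
      finally have B: "24 / (real N * real N) \<le> 24 * real T / (real N * l * \<delta>)" .
      have "4 / real N ^ 5 \<le> 24 / (real N * real N)"
      proof -
        have "real N * real N \<le> real N ^ 5" using Npos
          by (metis power2_eq_square power_increasing numeral_le_iff semiring_norm(69) one_le_numeral order_trans one_le_numeral power_one_right
              semiring_norm(72) le_numeral_extra(4) numerals(1) Npos)
        then show ?thesis using Npos by (simp add: frac_le)
      qed
      with B A0 show ?thesis unfolding R_def l_def N_def by linarith
    qed
    have "measure M S1 \<le> measure M G" using S1G GS by (rule C.finite_measure_mono)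
    moreover have "measure M S2 \<le> measure M G" using S2G GS by (rule C.finite_measure_mono)
    ultimately show ?thesis using PG PR by linarith
  qed
  then show ?thesis unfolding S1_def S2_def R_def lam_def by blast
qed

end
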